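(* Let $G$ be the undirected graph with vertex set $\{v_1,\dots,v_8\}$ and edge set $\{v_1v_5,\ v_1v_6,\ v_2v_5,\ v_2v_6,\ v_2v_7,\ v_2v_8,\ v_4v_7,\ v_4v_8\}$, and let $V_1=\{v_1,v_2,v_7,v_8\}$, $V_2=\{v_2,v_4,v_5,v_6\}$, $V_3=\{v_1,v_2,v_3,v_4\}$, $V_4=\{v_5,v_6,v_7,v_8\}$. Let $\mu\ge 4$ be even and let $\nu=\frac{\mu}{2}-1$. Consider the population (multiset of $\mu$ vertex covers of $G$) consisting of one copy of $V_1$, one copy of $V_2$, $\nu$ copies of $V_3$ and $\nu$ copies of $V_4$. Then this population has sub-optimal diversity (total Hamming distance) among populations of $\mu$ vertex covers of $G$ of size at most $4$, and replacing any one individual of it with any different vertex cover of $G$ of size at most $4$ strictly reduces the diversity.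
   Context: A vertex cover of $G=(V,E)$ is a set $C\subseteq V$ such that every edge has at least one endpoint in $C$. Subsets of $V$ are identified with bit strings of length $|V|$ (bit $i$ indicates whether $v_i$ is included). For a population $P=(x_1,\dots,x_\mu)$ (a multiset) of bit strings, the diversity is the total Hamming distance $D(P)=\sum_{1\le a<b\le \mu} H(x_a,x_b)$, where $H$ is the Hamming distance. *)

theory Defs
  imports Main
begin

(* Vertices v_1..v_8 are represented by the natural numbers 1..8.
   A subset of V is identified with its bit string; Hamming distance of
   two bit strings = cardinality of the symmetric difference of the sets. *)

definition Vset :: "nat set" where
  "Vset = {1..8}"

definition Eset :: "(nat \<times> nat) set" where
  "Eset = {(1,5), (1,6), (2,5), (2,6), (2,7), (2,8), (4,7), (4,8)}"

definition is_vertex_cover :: "nat set \<Rightarrow> bool" where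
  "is_vertex_cover C \<longleftrightarrow> C \<subseteq> Vset \<and> (\<forall>(u,v) \<in> Eset. u \<in> C \<or> v \<in> C)"

definition hamming :: "nat set \<Rightarrow> nat set \<Rightarrow> nat" where
  "hamming A B = card ((A - B) \<union> (B - A))"

definition diversity :: "nat set list \<Rightarrow> nat" where
  "diversity P = (\<Sum>b<length P. \<Sum>a<b. hamming (P ! a) (P ! b))"

definition valid_pop :: "nat \<Rightarrow> nat set list \<Rightarrow> bool" where
  "valid_pop \<mu> P \<longleftrightarrow> length P = \<mu> \<and> (\<forall>x \<in> set P. is_vertex_cover x \<and> card x \<le> 4)"

definition V1 :: "nat set" where "V1 = {1,2,7,8}"
definition V2 :: "nat set" where "V2 = {2,4,5,6}"
definition V3 :: "nat set" where "V3 = {1,2,3,4}"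
definition V4 :: "nat set" where "V4 = {5,6,7,8}"

definition pop4 :: "nat \<Rightarrow> nat set list" where
  "pop4 \<mu> = (let \<nu> = \<mu> div 2 - 1 in [V1, V2] @ replicate \<nu> V3 @ replicate \<nu> V4)"

end

theory Submission
  imports Defs
begin

definition cnt :: "nat \<Rightarrow> nat set list \<Rightarrow> nat" where
  "cnt j P = length (filter (\<lambda>x. j \<in> x) P)"

lemma card_as_sum:
  assumes "S \<subseteq> {1..8::nat}"
  shows "card S = (\<Sum>j\<in>{1..8}. if j \<in> S then 1 else 0)"
proof -
  have "S = {j\<in>{1..8}. j \<in> S}" using assms by auto
  then have "card S = card {j\<in>{1..8::nat}. j \<in> S}" by simp
  also have "\<dots> = (\<Sum>j\<in>{j\<in>{1..8::nat}. j \<in> S}. 1)" by simp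
  also have "\<dots> = (\<Sum>j\<in>{1..8}. if j \<in> S then 1 else 0)"
    by (subst sum.inter_filter) auto
  finally show ?thesis .
qed

lemma hamming_sum:
  assumes "A \<subseteq> {1..8}" "B \<subseteq> {1..8}"
  shows "hamming A B = (\<Sum>j\<in>{1..8}. if (j \<in> A) \<noteq> (j \<in> B) then 1 else 0)"
  unfolding hamming_def
  using assms by (subst card_as_sum) (auto intro!: sum.cong)

lemma cnt_snoc: "cnt j (xs @ [y]) = cnt j xs + (if j \<in> y then 1 else 0)"
  by (simp add: cnt_def)

lemma cnt_le: "cnt j xs \<le> length xs"
  by (simp add: cnt_def)

lemma sum_diff_count:
  "(\<Sum>a<length xs. if (j \<in> xs ! a) \<noteq> (j \<in> y) then 1 else 0)
   = (if j \<in> y then length xs - cnt j xs else cnt j xs)"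
proof (induction xs rule: rev_induct)
  case Nil
  then show ?case by (simp add: cnt_def)
next
  case (snoc x xs)
  have "(\<Sum>a<length (xs @ [x]). if (j \<in> (xs @ [x]) ! a) \<noteq> (j \<in> y) then 1 else 0)
      = (\<Sum>a<length xs. if (j \<in> xs ! a) \<noteq> (j \<in> y) then 1 else 0)
        + (if (j \<in> x) \<noteq> (j \<in> y) then 1 else (0::nat))"
  proof -
    have "(\<Sum>a<length xs. if (j \<in> (xs @ [x]) ! a) \<noteq> (j \<in> y) then 1 else 0)
       = (\<Sum>a<length xs. if (j \<in> xs ! a) \<noteq> (j \<in> y) then 1 else (0::nat))"
      by (intro sum.cong refl) (auto simp: nth_append)
    note eq = this
    show ?thesis unfolding length_append_singleton sum.lessThan_Suc nth_append_length using eq by (metis (no_types, lifting))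
  qed
  then show ?case unfolding cnt_snoc using snoc.IH cnt_le[of j xs] by (simp split: if_splits)
qed

lemma diversity_snoc:
  "diversity (xs @ [y]) = diversity xs + (\<Sum>a<length xs. hamming (xs ! a) y)"
  unfolding diversity_def by (simp add: nth_append)

lemma diversity_formula:
  assumes "\<forall>x\<in>set P. x \<subseteq> {1..8}"
  shows "int (diversity P) = (\<Sum>j\<in>{1..8}. int (cnt j P) * (int (length P) - int (cnt j P)))"
  using assms
proof (induction P rule: rev_induct)
  case Nil
  then show ?case by (simp add: diversity_def cnt_def)
next
  case (snoc y xs)
  have sub: "\<forall>x\<in>set xs. x \<subseteq> {1..8}" "y \<subseteq> {1..8}" using snoc.prems by auto
  have "(\<Sum>a<length xs. hamming (xs ! a) y)
      = (\<Sum>a<length xs. \<Sum>j\<in>{1..8}. if (j \<in> xs ! a) \<noteq> (j \<in> y) then 1 else 0)"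
    using sub by (intro sum.cong refl hamming_sum) auto
  also have "\<dots> = (\<Sum>j\<in>{1..8}. \<Sum>a<length xs. if (j \<in> xs ! a) \<noteq> (j \<in> y) then 1 else 0)"
    by (rule sum.swap)
  also have "\<dots> = (\<Sum>j\<in>{1..8}. if j \<in> y then length xs - cnt j xs else cnt j xs)"
    by (rule sum.cong[OF refl], rule sum_diff_count)
  finally have h: "(\<Sum>a<length xs. hamming (xs ! a) y) = \<dots>" .
  have "int (diversity (xs @ [y])) = int (diversity xs)
        + (\<Sum>j\<in>{1..8}. int (if j \<in> y then length xs - cnt j xs else cnt j xs))"
    by (simp add: diversity_snoc h)
  also have "\<dots> = (\<Sum>j\<in>{1..8}. int (cnt j xs) * (int (length xs) - int (cnt j xs))
        + int (if j \<in> y then length xs - cnt j xs else cnt j xs))"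
    using snoc.IH sub by (simp add: sum.distrib)
  also have "\<dots> = (\<Sum>j\<in>{1..8}. int (cnt j (xs @ [y])) * (int (length (xs @ [y])) - int (cnt j (xs @ [y]))))"
  proof (intro sum.cong refl)
    fix j
    have "cnt j xs \<le> length xs" by (rule cnt_le)
    then show "int (cnt j xs) * (int (length xs) - int (cnt j xs))
        + int (if j \<in> y then length xs - cnt j xs else cnt j xs)
       = int (cnt j (xs @ [y])) * (int (length (xs @ [y])) - int (cnt j (xs @ [y])))"
      by (auto simp: cnt_snoc of_nat_diff algebra_simps)
  qed
  finally show ?case .
qed

lemma cnt_update:
  "i < length xs \<Longrightarrow> int (cnt j (xs[i := C])) =
     int (cnt j xs) - (if j \<in> xs ! i then 1 else 0) + (if j \<in> C then 1 else 0)"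
proof (induction xs arbitrary: i)
  case Nil
  then show ?case by simp
next
  case (Cons a xs)
  show ?case
  proof (cases i)
    case 0
    then show ?thesis by (auto simp: cnt_def)
  next
    case (Suc n)
    then have "n < length xs" using Cons.prems by simp
    from Cons.IH[OF this] show ?thesis using Suc by (auto simp: cnt_def)
  qed
qed

definition ind :: "bool \<Rightarrow> int" where "ind b = (if b then 1 else 0)"

definition T9 :: "(bool \<times> bool \<times> bool \<times> bool \<times> bool \<times> bool \<times> bool \<times> bool) set" where
  "T9 = {(True,True,False,True,False,False,False,False),
         (True,True,True,True,False,False,False,False),
         (True,True,False,True,True,False,False,False),
         (True,True,False,True,False,True,False,False),
         (True,True,False,True,False,False,True,False),
         (True,True,False,True,False,False,False,True),
         (True,True,False,False,False,False,True,True),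
         (False,True,False,True,True,True,False,False),
         (False,False,False,False,True,True,True,True)}"

definition sel :: "bool \<Rightarrow> nat \<Rightarrow> nat set" where "sel b k = (if b then {k} else {})"

lemma covers_aux:
  fixes b1 b2 b3 b4 b5 b6 b7 b8 :: bool
  assumes "(b1 \<or> b5) \<and> (b1 \<or> b6) \<and> (b2 \<or> b5) \<and> (b2 \<or> b6)
     \<and> (b2 \<or> b7) \<and> (b2 \<or> b8) \<and> (b4 \<or> b7) \<and> (b4 \<or> b8)"
    and "card (sel b1 1 \<union> sel b2 2 \<union> sel b3 3 \<union> sel b4 4 \<union> sel b5 5 \<union> sel b6 6 \<union> sel b7 7 \<union> sel b8 8) \<le> 4"
  shows "(b1,b2,b3,b4,b5,b6,b7,b8) \<in> T9"
  using assms unfolding T9_def sel_def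
  by (cases b1; cases b2; cases b3; cases b4; cases b5; cases b6; cases b7; cases b8) simp_all

lemma covers:
  assumes "is_vertex_cover C" "card C \<le> 4"
  shows "(1\<in>C, 2\<in>C, 3\<in>C, 4\<in>C, 5\<in>C, 6\<in>C, 7\<in>C, 8\<in>C) \<in> T9"
proof -
  have sub: "C \<subseteq> {1,2,3,4,5,6,7,8}" using assms(1) by (auto simp: is_vertex_cover_def Vset_def)
  have e: "(1 \<in> C \<or> 5 \<in> C) \<and> (1 \<in> C \<or> 6 \<in> C) \<and> (2 \<in> C \<or> 5 \<in> C) \<and> (2 \<in> C \<or> 6 \<in> C)
     \<and> (2 \<in> C \<or> 7 \<in> C) \<and> (2 \<in> C \<or> 8 \<in> C) \<and> (4 \<in> C \<or> 7 \<in> C) \<and> (4 \<in> C \<or> 8 \<in> C)"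
    using assms(1) by (auto simp: is_vertex_cover_def Eset_def)
  have "C = sel (1\<in>C) 1 \<union> sel (2\<in>C) 2 \<union> sel (3\<in>C) 3 \<union> sel (4\<in>C) 4 \<union> sel (5\<in>C) 5 \<union> sel (6\<in>C) 6 \<union> sel (7\<in>C) 7 \<union> sel (8\<in>C) 8"
    using sub by (auto simp: sel_def)
  then show ?thesis using covers_aux[OF e] assms(2) by simp
qed

definition T4 :: "(bool \<times> bool \<times> bool \<times> bool \<times> bool \<times> bool \<times> bool \<times> bool) set" where
  "T4 = {(True,True,False,False,False,False,True,True),
         (False,True,False,True,True,True,False,False),
         (True,True,True,True,False,False,False,False),
         (False,False,False,False,True,True,True,True)}"

definition F :: "int \<Rightarrow> int \<Rightarrow> bool \<Rightarrow> bool \<Rightarrow> int" where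
  "F m k a c = (k - ind a + ind c) * (m - (k - ind a + ind c))"

definition dd :: "bool \<Rightarrow> bool \<Rightarrow> int" where "dd a c = ind c - ind a"

lemma F_eq: "F m k a c = k*(m-k) + dd a c*(m - 2*k) - dd a c * dd a c"
  unfolding F_def dd_def by (simp add: algebra_simps)

lemma core_bool:
  assumes "(c1,c2,c3,c4,c5,c6,c7,c8) \<in> T9"
    and "(a1,a2,a3,a4,a5,a6,a7,a8) \<in> T4"
    and "(c1,c2,c3,c4,c5,c6,c7,c8) \<noteq> (a1,a2,a3,a4,a5,a6,a7,a8)"
  shows "- 2 * dd a2 c2 + 2 * dd a3 c3 - dd a1 c1 * dd a1 c1 - dd a2 c2 * dd a2 c2 - dd a3 c3 * dd a3 c3
     - dd a4 c4 * dd a4 c4 - dd a5 c5 * dd a5 c5 - dd a6 c6 * dd a6 c6 - dd a7 c7 * dd a7 c7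
     - dd a8 c8 * dd a8 c8 < 0"
  using assms unfolding T9_def T4_def
  by (auto simp: dd_def ind_def)

lemma core:
  fixes n :: int
  assumes "n \<ge> 1"
    and "(c1,c2,c3,c4,c5,c6,c7,c8) \<in> T9"
    and "(a1,a2,a3,a4,a5,a6,a7,a8) \<in> T4"
    and "(c1,c2,c3,c4,c5,c6,c7,c8) \<noteq> (a1,a2,a3,a4,a5,a6,a7,a8)"
  shows "F (2*n+2) (n+1) a1 c1 + F (2*n+2) (n+2) a2 c2 + F (2*n+2) n a3 c3 + F (2*n+2) (n+1) a4 c4
       + F (2*n+2) (n+1) a5 c5 + F (2*n+2) (n+1) a6 c6 + F (2*n+2) (n+1) a7 c7 + F (2*n+2) (n+1) a8 c8
     < (n+1)*(2*n+2-(n+1)) + (n+2)*(2*n+2-(n+2)) + n*(2*n+2-n) + (n+1)*(2*n+2-(n+1))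
       + (n+1)*(2*n+2-(n+1)) + (n+1)*(2*n+2-(n+1)) + (n+1)*(2*n+2-(n+1)) + (n+1)*(2*n+2-(n+1))"
proof -
  have b: "- 2 * dd a2 c2 + 2 * dd a3 c3 - dd a1 c1 * dd a1 c1 - dd a2 c2 * dd a2 c2 - dd a3 c3 * dd a3 c3
     - dd a4 c4 * dd a4 c4 - dd a5 c5 * dd a5 c5 - dd a6 c6 * dd a6 c6 - dd a7 c7 * dd a7 c7
     - dd a8 c8 * dd a8 c8 < 0" by (rule core_bool[OF assms(2-4)])
  have e1: "2*n+2 - 2*(n+1) = 0" "2*n+2 - 2*(n+2) = -2" "2*n+2 - 2*n = 2" by simp_all
  show ?thesis unfolding F_eq e1 using b by simp
qed

lemma sum18: "sum g {1..8::nat} = g 1 + g 2 + g 3 + g 4 + g 5 + g 6 + g 7 + g 8"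
proof -
  have "{1..8::nat} = {1,2,3,4,5,6,7,8}" by auto
  then show ?thesis by (simp add: add.assoc)
qed

lemma cnt_append: "cnt j (xs @ ys) = cnt j xs + cnt j ys"
  by (simp add: cnt_def)

lemma cnt_rep: "cnt j (replicate n A) = (if j \<in> A then n else 0)"
  by (simp add: cnt_def)

theorem lemma4:
  fixes \<mu> :: nat
  assumes "even \<mu>" and "\<mu> \<ge> 4"
  shows "(\<exists>Q. valid_pop \<mu> Q \<and> diversity (pop4 \<mu>) < diversity Q)
       \<and> (\<forall>i < \<mu>. \<forall>C. is_vertex_cover C \<and> card C \<le> 4 \<and> C \<noteq> pop4 \<mu> ! i
              \<longrightarrow> diversity ((pop4 \<mu>)[i := C]) < diversity (pop4 \<mu>))"
proof -
  define \<nu> where "\<nu> = \<mu> div 2 - 1"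
  have mu: "\<mu> = 2*\<nu> + 2" and nu1: "\<nu> \<ge> 1" using assms unfolding \<nu>_def by auto
  define P where "P = pop4 \<mu>"
  have P: "P = [V1, V2] @ replicate \<nu> V3 @ replicate \<nu> V4"
    unfolding P_def pop4_def \<nu>_def Let_def by simp
  have lenP: "length P = \<mu>" using mu P by simp
  have setP: "set P \<subseteq> {V1,V2,V3,V4}" using P by auto
  have subP: "\<forall>x\<in>set P. x \<subseteq> {1..8}" using setP by (auto simp: V1_def V2_def V3_def V4_def)
  have cntP: "\<And>j. cnt j P = (if j \<in> V1 then 1 else 0) + (if j \<in> V2 then 1 else 0)
      + (if j \<in> V3 then \<nu> else 0) + (if j \<in> V4 then \<nu> else 0)"
    using P by (simp add: cnt_append cnt_rep cnt_def)
  define n where "n = int \<nu>"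
  have n1: "n \<ge> 1" using nu1 n_def by simp
  have muint: "int \<mu> = 2*n+2" using mu n_def by simp
  have divP: "int (diversity P) =
       (n+1)*(2*n+2-(n+1)) + (n+2)*(2*n+2-(n+2)) + n*(2*n+2-n) + (n+1)*(2*n+2-(n+1))
       + (n+1)*(2*n+2-(n+1)) + (n+1)*(2*n+2-(n+1)) + (n+1)*(2*n+2-(n+1)) + (n+1)*(2*n+2-(n+1))"
    unfolding diversity_formula[OF subP] sum18 lenP muint cntP
    by (simp add: V1_def V2_def V3_def V4_def n_def algebra_simps)
  have part1: "\<exists>Q. valid_pop \<mu> Q \<and> diversity P < diversity Q"
  proof -
    define Q where "Q = replicate (\<nu>+1) V3 @ replicate (\<nu>+1) V4"
    have vc3: "is_vertex_cover V3" and vc4: "is_vertex_cover V4"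
      by (auto simp: is_vertex_cover_def V3_def V4_def Vset_def Eset_def)
    have "valid_pop \<mu> Q" unfolding valid_pop_def Q_def using mu vc3 vc4
      by (auto simp: V3_def V4_def)
    moreover have subQ: "\<forall>x\<in>set Q. x \<subseteq> {1..8}" by (auto simp: Q_def V3_def V4_def)
    have lenQ: "length Q = \<mu>" using mu Q_def by simp
    have cntQ: "\<And>j. cnt j Q = (if j \<in> V3 then \<nu>+1 else 0) + (if j \<in> V4 then \<nu>+1 else 0)"
      unfolding Q_def by (simp only: cnt_append cnt_rep)
    have "int (diversity Q) = 8 * ((n+1)*(2*n+2-(n+1)))"
      unfolding diversity_formula[OF subQ] sum18 lenQ muint cntQ
      by (simp add: V3_def V4_def n_def algebra_simps)
    then have "int (diversity P) < int (diversity Q)" using divP by (simp add: algebra_simps)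
    ultimately show ?thesis by auto
  qed
  have part2: "\<forall>i < \<mu>. \<forall>C. is_vertex_cover C \<and> card C \<le> 4 \<and> C \<noteq> P ! i
              \<longrightarrow> diversity (P[i := C]) < diversity P"
  proof (intro allI impI)
    fix i C
    assume i: "i < \<mu>" and hC: "is_vertex_cover C \<and> card C \<le> 4 \<and> C \<noteq> P ! i"
    have Csub: "C \<subseteq> {1..8}" using hC by (auto simp: is_vertex_cover_def Vset_def)
    have Pi: "P ! i \<in> {V1,V2,V3,V4}" using setP i lenP nth_mem by blast
    then have Pisub: "P ! i \<subseteq> {1..8}" by (auto simp: V1_def V2_def V3_def V4_def)
    have T4: "(1\<in>P!i, 2\<in>P!i, 3\<in>P!i, 4\<in>P!i, 5\<in>P!i, 6\<in>P!i, 7\<in>P!i, 8\<in>P!i) \<in> T4"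
    proof -
      from Pi have "P!i = V1 \<or> P!i = V2 \<or> P!i = V3 \<or> P!i = V4" by simp
      then show ?thesis by (elim disjE) (simp_all add: T4_def V1_def V2_def V3_def V4_def)
    qed
    have T9: "(1\<in>C, 2\<in>C, 3\<in>C, 4\<in>C, 5\<in>C, 6\<in>C, 7\<in>C, 8\<in>C) \<in> T9"
      using covers hC by blast
    have ne: "(1\<in>C, 2\<in>C, 3\<in>C, 4\<in>C, 5\<in>C, 6\<in>C, 7\<in>C, 8\<in>C)
        \<noteq> (1\<in>P!i, 2\<in>P!i, 3\<in>P!i, 4\<in>P!i, 5\<in>P!i, 6\<in>P!i, 7\<in>P!i, 8\<in>P!i)"
    proof
      assume eq: "(1\<in>C, 2\<in>C, 3\<in>C, 4\<in>C, 5\<in>C, 6\<in>C, 7\<in>C, 8\<in>C)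
        = (1\<in>P!i, 2\<in>P!i, 3\<in>P!i, 4\<in>P!i, 5\<in>P!i, 6\<in>P!i, 7\<in>P!i, 8\<in>P!i)"
      have "\<forall>j\<in>{1..8::nat}. (j \<in> C) = (j \<in> P!i)"
      proof
        fix j :: nat assume "j \<in> {1..8}"
        then have "j = 1 \<or> j = 2 \<or> j = 3 \<or> j = 4 \<or> j = 5 \<or> j = 6 \<or> j = 7 \<or> j = 8" by auto
        then show "(j \<in> C) = (j \<in> P!i)" using eq by (elim disjE) simp_all
      qed
      then have "C = P ! i" using Csub Pisub by blast
      then show False using hC by simp
    qed
    have subU: "\<forall>x\<in>set (P[i := C]). x \<subseteq> {1..8}"
      using subP Csub set_update_subset_insert[of P i C] by blast
    have il: "i < length P" using i lenP by simp
    have upd: "\<And>j. int (cnt j (P[i := C])) = int (cnt j P) - ind (j \<in> P ! i) + ind (j \<in> C)"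
      using cnt_update[OF il] by (simp add: ind_def)
    have cv: "int (cnt 1 P) = n+1" "int (cnt 2 P) = n+2" "int (cnt 3 P) = n" "int (cnt 4 P) = n+1"
      "int (cnt 5 P) = n+1" "int (cnt 6 P) = n+1" "int (cnt 7 P) = n+1" "int (cnt 8 P) = n+1"
      unfolding cntP by (simp_all add: V1_def V2_def V3_def V4_def n_def)
    have "int (diversity (P[i := C])) =
       F (2*n+2) (n+1) (1\<in>P!i) (1\<in>C) + F (2*n+2) (n+2) (2\<in>P!i) (2\<in>C) + F (2*n+2) n (3\<in>P!i) (3\<in>C)
       + F (2*n+2) (n+1) (4\<in>P!i) (4\<in>C) + F (2*n+2) (n+1) (5\<in>P!i) (5\<in>C) + F (2*n+2) (n+1) (6\<in>P!i) (6\<in>C)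
       + F (2*n+2) (n+1) (7\<in>P!i) (7\<in>C) + F (2*n+2) (n+1) (8\<in>P!i) (8\<in>C)"
      unfolding diversity_formula[OF subU] sum18 length_list_update lenP muint upd F_def cv
      by (rule refl)
    also have "\<dots> < int (diversity P)"
      unfolding divP by (rule core[OF n1 T9 T4 ne])
    finally show "diversity (P[i := C]) < diversity P" by simp
  qed
  show ?thesis using part1 part2 unfolding P_def by blast
qed

end
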